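(* Let $P$ be a finite set of predicates, let $\eta = \sigma_1,\ldots,\sigma_n$ be a trace over the alphabet $\Sigma = 2^P$ (so each $\sigma_i \subseteq P$), and let $\varphi$ be an LTLf formula over $P$. Run the query-processing algorithm described in the context on $\eta$ and $\varphi$. If some contiguous sub-trace $\sigma_k,\ldots,\sigma_\ell$ ($1 \le k \le \ell \le n$) of $\eta$ satisfies $\varphi$, then the algorithm returns a contiguous sub-trace $\sigma_k,\ldots,\sigma_\ell$ of $\eta$ with $(\sigma_k,\ldots,\sigma_\ell) \models \varphi$. Moreover, the algorithm processes (reads) $\eta$ at most twice: once forward and at most once backward.
   Context: LTLf syntax over a finite set of predicates $P$: each $p\in P$ is a formula; if $\varphi_1,\varphi_2$ are formulas then so are $\varphi_1\wedge\varphi_2$, $\neg\varphi_1$, $X\varphi_1$ ("next") and $\varphi_1 U \varphi_2$ ("until"); $F\varphi$ abbreviates $\texttt{True}\, U\, \varphi$. Semantics: for a finite nonempty trace $\eta=\sigma_1,\ldots,\sigma_k$ with $\sigma_i\subseteq P$: $\eta\models p$ iff $p\in\sigma_1$; $\eta\models\varphi_1\wedge\varphi_2$ iff $\eta\models\varphi_1$ and $\eta\models\varphi_2$; $\eta\models\neg\varphi_1$ iff $\eta\not\models\varphi_1$; $\eta\models X\varphi_1$ iff $(\sigma_2,\ldots,\sigma_k)\models\varphi_1$; $\eta\models\varphi_1 U\varphi_2$ iff there is $1\le i\le k$ with $(\sigma_i,\ldots,\sigma_k)\models\varphi_2$ and for each $1\le j\le i$, $(\sigma_j,\ldots,\sigma_k)\models\varphi_1$.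 A DFA is $\mathcal{A}=\langle\Sigma,Q,\delta,q_0,Acc\rangle$ with transition function $\delta:Q\times\Sigma\to Q$, initial state $q_0$, accepting states $Acc\subseteq Q$; it accepts a finite word if its run from $q_0$ ends in $Acc$. It is known (and may be assumed) that for every LTLf formula $\psi$ over $P$ there is a DFA $\mathcal{A}_\psi$ over $2^P$ accepting exactly the traces satisfying $\psi$. The algorithm: construct DFAs $\mathcal{A}_\varphi$ and $\mathcal{A}_{F\varphi}$ (with $\mathcal{A}_\varphi=\langle 2^P,Q,\delta,q_0,Acc\rangle$). Feed $\eta$ letter by letter (forward) to $\mathcal{A}_{F\varphi}$ until it first visits an accepting state, say after reading $\sigma_\ell$; if this never happens, report that no sub-trace exists. Otherwise read $\eta$ backward starting from $\sigma_\ell$, maintaining a set $Q'\subseteq Q$ initialized to $Acc$; upon reading a letter $\sigma$, update $Q' := \{q\in Q : \exists q'\in Q' \text{ with } q'=\delta(q,\sigma)\}$; stop as soon as $q_0\in Q'$, say after reading $\sigma_k$, and return $\sigma_k,\ldots,\sigma_\ell$. *)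

theory Defs
  imports Main
begin

datatype 'p ltlf =
    TT
  | Atom 'p
  | And "'p ltlf" "'p ltlf"
  | Neg "'p ltlf"
  | Next "'p ltlf"
  | Until "'p ltlf" "'p ltlf"

definition Ev :: "'p ltlf \<Rightarrow> 'p ltlf" where
  "Ev \<phi> = Until TT \<phi>"

fun atoms :: "'p ltlf \<Rightarrow> 'p set" where
  "atoms TT = {}"
| "atoms (Atom p) = {p}"
| "atoms (And a b) = atoms a \<union> atoms b"
| "atoms (Neg a) = atoms a"
| "atoms (Next a) = atoms a"
| "atoms (Until a b) = atoms a \<union> atoms b"

text \<open>Satisfaction at position i (0-based) of a finite trace; the suffix starting at i.\<close>
fun sat_at :: "'p set list \<Rightarrow> nat \<Rightarrow> 'p ltlf \<Rightarrow> bool" where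
  "sat_at w i TT = True"
| "sat_at w i (Atom p) = (p \<in> w ! i)"
| "sat_at w i (And a b) = (sat_at w i a \<and> sat_at w i b)"
| "sat_at w i (Neg a) = (\<not> sat_at w i a)"
| "sat_at w i (Next a) = (Suc i < length w \<and> sat_at w (Suc i) a)"
| "sat_at w i (Until a b) =
     (\<exists>j. i \<le> j \<and> j < length w \<and> sat_at w j b \<and> (\<forall>m. i \<le> m \<and> m \<le> j \<longrightarrow> sat_at w m a))"

definition models :: "'p set list \<Rightarrow> 'p ltlf \<Rightarrow> bool" where
  "models w \<phi> \<longleftrightarrow> w \<noteq> [] \<and> sat_at w 0 \<phi>"

definition run :: "('q \<Rightarrow> 'a \<Rightarrow> 'q) \<Rightarrow> 'q \<Rightarrow> 'a list \<Rightarrow> 'q" where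
  "run \<delta> q w = fold (\<lambda>a s. \<delta> s a) w q"

definition dfa_accepts :: "('q \<Rightarrow> 'a \<Rightarrow> 'q) \<Rightarrow> 'q \<Rightarrow> 'q set \<Rightarrow> 'a list \<Rightarrow> bool" where
  "dfa_accepts \<delta> q0 Acc w \<longleftrightarrow> run \<delta> q0 w \<in> Acc"

definition recognizes :: "'p set \<Rightarrow> ('q \<Rightarrow> 'p set \<Rightarrow> 'q) \<Rightarrow> 'q \<Rightarrow> 'q set \<Rightarrow> 'p ltlf \<Rightarrow> bool" where
  "recognizes P \<delta> q0 Acc \<psi> \<longleftrightarrow>
     (\<forall>w. w \<noteq> [] \<and> set w \<subseteq> Pow P \<longrightarrow> (dfa_accepts \<delta> q0 Acc w \<longleftrightarrow> models w \<psi>))"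

text \<open>Returns the 1-based index l of the letter after which acceptance first occurs,
  together with the number of letters read.\<close>
fun fwd :: "('q \<Rightarrow> 'a \<Rightarrow> 'q) \<Rightarrow> 'q set \<Rightarrow> 'q \<Rightarrow> nat \<Rightarrow> 'a list \<Rightarrow> nat option \<times> nat" where
  "fwd \<delta> Acc q i [] = (None, 0)"
| "fwd \<delta> Acc q i (a # w) =
     (let q' = \<delta> q a in
      if q' \<in> Acc then (Some (Suc i), 1)
      else (let (r, c) = fwd \<delta> Acc q' (Suc i) w in (r, Suc c)))"

text \<open>Backward pass: the letters are given in reverse order starting from sigma_l, i is the
  1-based index of the next letter to be read; S is the current set Q'.\<close>
fun bwd :: "('q \<Rightarrow> 'a \<Rightarrow> 'q) \<Rightarrow> 'q \<Rightarrow> 'q set \<Rightarrow> nat \<Rightarrow> 'a list \<Rightarrow> nat option \<times> nat" where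
  "bwd \<delta> q0 S i [] = (None, 0)"
| "bwd \<delta> q0 S i (a # w) =
     (let S' = {q. \<delta> q a \<in> S} in
      if q0 \<in> S' then (Some i, 1)
      else (let (r, c) = bwd \<delta> q0 S' (i - 1) w in (r, Suc c)))"

text \<open>The whole algorithm: arguments are the DFA for phi (delta, q0, Acc), the DFA for F phi
  (deltaF, q0F, AccF) and the trace eta. Returns (result, forward reads, backward reads),
  where result = Some (k, l) means the sub-trace sigma_k ... sigma_l (1-based) is returned.\<close>
definition query :: "('q \<Rightarrow> 'a \<Rightarrow> 'q) \<Rightarrow> 'q \<Rightarrow> 'q set \<Rightarrow>
                     ('r \<Rightarrow> 'a \<Rightarrow> 'r) \<Rightarrow> 'r \<Rightarrow> 'r set \<Rightarrow> 'a list \<Rightarrow>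
                     (nat \<times> nat) option \<times> nat \<times> nat" where
  "query \<delta> q0 Acc \<delta>F q0F AccF \<eta> =
     (case fwd \<delta>F AccF q0F 0 \<eta> of
        (None, cf) \<Rightarrow> (None, cf, 0)
      | (Some l, cf) \<Rightarrow>
          (case bwd \<delta> q0 Acc l (rev (take l \<eta>)) of
             (None, cb) \<Rightarrow> (None, cf, cb)
           | (Some k, cb) \<Rightarrow> (Some (k, l), cf, cb)))"

text \<open>Contiguous sub-trace sigma_k ... sigma_l (1-based, inclusive).\<close>
definition subtrace :: "'a list \<Rightarrow> nat \<Rightarrow> nat \<Rightarrow> 'a list" where
  "subtrace \<eta> k l = drop (k - 1) (take l \<eta>)"

end

theory Submission
  imports Defs
begin

lemma sat_drop: "j \<le> length w \<Longrightarrow> sat_at (drop j w) i \<phi> = sat_at w (i+j) \<phi>"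
proof (induction \<phi> arbitrary: i)
  case (Until a b)
  show ?case
  proof
    assume "sat_at (drop j w) i (Until a b)"
    then obtain x where x: "i \<le> x" "x < length w - j" "sat_at (drop j w) x b"
       "\<forall>m. i \<le> m \<and> m \<le> x \<longrightarrow> sat_at (drop j w) m a" by auto
    have "\<forall>m. i + j \<le> m \<and> m \<le> x + j \<longrightarrow> sat_at w m a"
    proof (intro allI impI)
      fix m assume m: "i + j \<le> m \<and> m \<le> x + j"
      then have "sat_at (drop j w) (m - j) a" using x(4)[rule_format, of "m-j"] by linarith
      then show "sat_at w m a" using Until.IH(1)[OF Until.prems, of "m-j"] m by simp
    qed
    moreover have "sat_at w (x+j) b" using x(3) Until.IH(2)[OF Until.prems] by simp
    ultimately show "sat_at w (i+j) (Until a b)" using x(1,2)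
      by (simp only: sat_at.simps) (intro exI[of _ "x+j"], simp)
  next
    assume "sat_at w (i+j) (Until a b)"
    then obtain x where x: "i+j \<le> x" "x < length w" "sat_at w x b"
       "\<forall>m. i+j \<le> m \<and> m \<le> x \<longrightarrow> sat_at w m a" by auto
    have "\<forall>m. i \<le> m \<and> m \<le> x - j \<longrightarrow> sat_at (drop j w) m a"
    proof (intro allI impI)
      fix m assume m: "i \<le> m \<and> m \<le> x - j"
      then have "sat_at w (m + j) a" using x(1) x(4)[rule_format, of "m+j"] by linarith
      then show "sat_at (drop j w) m a" using Until.IH(1)[OF Until.prems, of m] by simp
    qed
    moreover have "sat_at (drop j w) (x-j) b" using x(1,3) Until.IH(2)[OF Until.prems, of "x-j"] by simp
    ultimately show "sat_at (drop j w) i (Until a b)" using x(1,2)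
      by (simp only: sat_at.simps) (intro exI[of _ "x-j"], simp, linarith)
  qed
next
  case (Atom p) thus ?case by (simp add: add.commute)
next
  case (Next a) thus ?case by auto
qed simp_all


lemma run_Cons: "run \<delta> q (a#w) = run \<delta> (\<delta> q a) w"
  by (simp add: run_def)

lemma run_snoc: "run \<delta> q (w@[a]) = \<delta> (run \<delta> q w) a"
  by (simp add: run_def)

lemma fwd_some: "fst (fwd \<delta> Acc q i w) = Some m \<Longrightarrow>
   i < m \<and> m \<le> i + length w \<and> run \<delta> q (take (m-i) w) \<in> Acc"
proof (induction w arbitrary: q i)
  case Nil thus ?case by simp
next
  case (Cons a w)
  show ?case
  proof (cases "\<delta> q a \<in> Acc")
    case True
    then have "m = Suc i" using Cons.prems by simp
    thus ?thesis using True by (simp add: run_def)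
  next
    case False
    then have "fst (fwd \<delta> Acc (\<delta> q a) (Suc i) w) = Some m"
      using Cons.prems by (simp split: prod.splits)
    from Cons.IH[OF this] have h: "Suc i < m" "m \<le> Suc (i + length w)"
       "run \<delta> (\<delta> q a) (take (m - Suc i) w) \<in> Acc" by auto
    have "m - i = Suc (m - Suc i)" using h by arith
    then show ?thesis using h by (simp add: run_Cons)
  qed
qed

lemma fwd_none: "fst (fwd \<delta> Acc q i w) = None \<Longrightarrow> 1 \<le> n \<Longrightarrow> n \<le> length w \<Longrightarrow>
   run \<delta> q (take n w) \<notin> Acc"
proof (induction w arbitrary: q i n)
  case Nil thus ?case by simp
next
  case (Cons a w)
  have na: "\<delta> q a \<notin> Acc" using Cons.prems by (auto split: if_splits)
  then have f: "fst (fwd \<delta> Acc (\<delta> q a) (Suc i) w) = None"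
    using Cons.prems by (simp split: prod.splits)
  show ?case
  proof (cases "n = 1")
    case True thus ?thesis using na by (simp add: run_def)
  next
    case False
    then obtain n' where n: "n = Suc n'" "1 \<le> n'" using Cons.prems by (cases n) auto
    show ?thesis using Cons.IH[OF f n(2)] Cons.prems n by (simp add: run_Cons)
  qed
qed

lemma fwd_cnt: "snd (fwd \<delta> Acc q i w) \<le> length w"
  by (induction w arbitrary: q i) (auto simp: Let_def split: prod.splits, metis snd_conv)

lemma bwd_some: "fst (bwd \<delta> q0 S i v) = Some k \<Longrightarrow>
   \<exists>m. 1 \<le> m \<and> m \<le> length v \<and> k = i - (m-1) \<and> run \<delta> q0 (rev (take m v)) \<in> S"
proof (induction v arbitrary: S i)
  case Nil thus ?case by simp
next
  case (Cons a v)
  show ?case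
  proof (cases "\<delta> q0 a \<in> S")
    case True thus ?thesis using Cons.prems
      by (intro exI[of _ 1]) (simp add: run_def)
  next
    case False
    then have "fst (bwd \<delta> q0 {q. \<delta> q a \<in> S} (i-1) v) = Some k"
      using Cons.prems by (simp split: prod.splits)
    from Cons.IH[OF this] obtain m where
      "1 \<le> m" "m \<le> length v" "k = i - 1 - (m-1)" "run \<delta> q0 (rev (take m v)) \<in> {q. \<delta> q a \<in> S}"
      by blast
    thus ?thesis
      by (intro exI[of _ "Suc m"]) (auto simp: run_snoc)
  qed
qed

lemma bwd_none: "fst (bwd \<delta> q0 S i v) = None \<Longrightarrow> 1 \<le> m \<Longrightarrow> m \<le> length v \<Longrightarrow>
   run \<delta> q0 (rev (take m v)) \<notin> S"
proof (induction v arbitrary: S i m)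
  case Nil thus ?case by simp
next
  case (Cons a v)
  have na: "\<delta> q0 a \<notin> S" using Cons.prems by (auto split: if_splits)
  then have f: "fst (bwd \<delta> q0 {q. \<delta> q a \<in> S} (i-1) v) = None"
    using Cons.prems by (simp split: prod.splits)
  show ?case
  proof (cases "m = 1")
    case True thus ?thesis using na by (simp add: run_def)
  next
    case False
    then obtain n' where n: "m = Suc n'" "1 \<le> n'" using Cons.prems by (cases m) auto
    show ?thesis using Cons.IH[OF f n(2)] Cons.prems n by (simp add: run_snoc)
  qed
qed

lemma bwd_cnt: "snd (bwd \<delta> q0 S i v) \<le> length v"
  by (induction v arbitrary: S i) (auto simp: Let_def split: prod.splits, metis snd_conv)

theorem mainTheorem1:
  fixes P :: "'p set" and \<eta> :: "'p set list" and \<phi> :: "'p ltlf"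
    and \<delta> :: "'q::finite \<Rightarrow> 'p set \<Rightarrow> 'q" and q0 :: 'q and Acc :: "'q set"
    and \<delta>F :: "'r::finite \<Rightarrow> 'p set \<Rightarrow> 'r" and q0F :: 'r and AccF :: "'r set"
  assumes "finite P"
    and "set \<eta> \<subseteq> Pow P"
    and "atoms \<phi> \<subseteq> P"
    and "recognizes P \<delta> q0 Acc \<phi>"
    and "recognizes P \<delta>F q0F AccF (Ev \<phi>)"
  shows "((\<exists>k l. 1 \<le> k \<and> k \<le> l \<and> l \<le> length \<eta> \<and> models (subtrace \<eta> k l) \<phi>) \<longrightarrow>
            (\<exists>k l. fst (query \<delta> q0 Acc \<delta>F q0F AccF \<eta>) = Some (k, l) \<and>
                   1 \<le> k \<and> k \<le> l \<and> l \<le> length \<eta> \<and> models (subtrace \<eta> k l) \<phi>))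
       \<and> fst (snd (query \<delta> q0 Acc \<delta>F q0F AccF \<eta>)) \<le> length \<eta>
       \<and> snd (snd (query \<delta> q0 Acc \<delta>F q0F AccF \<eta>)) \<le> length \<eta>"
proof (intro conjI)
  have setsub: "\<And>w. set w \<subseteq> set \<eta> \<Longrightarrow> set w \<subseteq> Pow P" using assms(2) by blast
  have RF: "\<And>w. w \<noteq> [] \<Longrightarrow> set w \<subseteq> set \<eta> \<Longrightarrow> run \<delta>F q0F w \<in> AccF \<longleftrightarrow> models w (Ev \<phi>)"
    using assms(5) setsub unfolding recognizes_def dfa_accepts_def by blast
  have R: "\<And>w. w \<noteq> [] \<Longrightarrow> set w \<subseteq> set \<eta> \<Longrightarrow> run \<delta> q0 w \<in> Acc \<longleftrightarrow> models w \<phi>"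
    using assms(4) setsub unfolding recognizes_def dfa_accepts_def by blast
  have st: "\<And>a b. set (drop a (take b \<eta>)) \<subseteq> set \<eta>"
    by (meson order_trans set_drop_subset set_take_subset)
  have st2: "\<And>b. set (take b \<eta>) \<subseteq> set \<eta>" by (rule set_take_subset)
  have q1: "fst (snd (query \<delta> q0 Acc \<delta>F q0F AccF \<eta>)) = snd (fwd \<delta>F AccF q0F 0 \<eta>)"
    by (simp add: query_def split: prod.split option.split)
  show "fst (snd (query \<delta> q0 Acc \<delta>F q0F AccF \<eta>)) \<le> length \<eta>"
    unfolding q1 by (rule fwd_cnt)
  show "snd (snd (query \<delta> q0 Acc \<delta>F q0F AccF \<eta>)) \<le> length \<eta>"
  proof -
    have b: "\<And>l. snd (bwd \<delta> q0 Acc l (rev (take l \<eta>))) \<le> length \<eta>"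
    proof -
      fix l
      have "snd (bwd \<delta> q0 Acc l (rev (take l \<eta>))) \<le> length (rev (take l \<eta>))" by (rule bwd_cnt)
      also have "\<dots> \<le> length \<eta>" by simp
      finally show "snd (bwd \<delta> q0 Acc l (rev (take l \<eta>))) \<le> length \<eta>" .
    qed
    obtain r cf where fw: "fwd \<delta>F AccF q0F 0 \<eta> = (r, cf)" by fastforce
    show ?thesis
    proof (cases r)
      case None thus ?thesis using fw by (simp add: query_def)
    next
      case (Some l)
      obtain s cb where bw: "bwd \<delta> q0 Acc l (rev (take l \<eta>)) = (s, cb)" by fastforce
      have "cb \<le> length \<eta>" using b[of l] bw by simp
      thus ?thesis using fw Some bw by (cases s) (simp_all add: query_def)
    qed
  qed
  show "(\<exists>k l. 1 \<le> k \<and> k \<le> l \<and> l \<le> length \<eta> \<and> models (subtrace \<eta> k l) \<phi>) \<longrightarrow>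
            (\<exists>k l. fst (query \<delta> q0 Acc \<delta>F q0F AccF \<eta>) = Some (k, l) \<and>
                   1 \<le> k \<and> k \<le> l \<and> l \<le> length \<eta> \<and> models (subtrace \<eta> k l) \<phi>)"
  proof
    assume "\<exists>k l. 1 \<le> k \<and> k \<le> l \<and> l \<le> length \<eta> \<and> models (subtrace \<eta> k l) \<phi>"
    then obtain k l where kl: "1 \<le> k" "k \<le> l" "l \<le> length \<eta>" "models (subtrace \<eta> k l) \<phi>"
      by blast
    have "sat_at (take l \<eta>) (k-1) \<phi>"
      using kl sat_drop[of "k-1" "take l \<eta>" 0 \<phi>] by (simp add: models_def subtrace_def)
    then have "models (take l \<eta>) (Ev \<phi>)"
      using kl by (auto simp: models_def Ev_def intro!: exI[of _ "k-1"])
    then have accF: "run \<delta>F q0F (take l \<eta>) \<in> AccF"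
      using RF[OF _ st2, of l] kl by (simp add: models_def)
    obtain r cf where fw: "fwd \<delta>F AccF q0F 0 \<eta> = (r, cf)" by fastforce
    have "r \<noteq> None"
      using fwd_none[of \<delta>F AccF q0F 0 \<eta> l] fw kl accF by auto
    then obtain l' where r: "r = Some l'" by auto
    from fwd_some[of \<delta>F AccF q0F 0 \<eta> l'] fw r
    have l': "0 < l'" "l' \<le> length \<eta>" "run \<delta>F q0F (take l' \<eta>) \<in> AccF" by auto
    let ?u = "take l' \<eta>"
    have lu: "length ?u = l'" using l' by simp
    have "models ?u (Ev \<phi>)"
      using RF[OF _ st2, of l'] l' by (cases \<eta>) auto
    then obtain j where j: "j < l'" "sat_at ?u j \<phi>"
      using l' by (auto simp: models_def Ev_def)
    have "models (drop j ?u) \<phi>"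
      using j sat_drop[of j ?u 0 \<phi>] lu by (simp add: models_def)
    then have accj: "run \<delta> q0 (drop j ?u) \<in> Acc"
      using R[OF _ st, of j l'] j lu by (simp add: models_def)
    obtain s cb where bw: "bwd \<delta> q0 Acc l' (rev ?u) = (s, cb)" by fastforce
    have "s \<noteq> None"
    proof
      assume "s = None"
      then have "run \<delta> q0 (rev (take (l' - j) (rev ?u))) \<notin> Acc"
        using bwd_none[of \<delta> q0 Acc l' "rev ?u" "l'-j"] bw j lu by auto
      moreover have "rev (take (l' - j) (rev ?u)) = drop j ?u"
        using j lu by (simp add: take_rev)
      ultimately show False using accj by simp
    qed
    then obtain k' where s: "s = Some k'" by auto
    from bwd_some[of \<delta> q0 Acc l' "rev ?u" k'] bw s obtain m where
      m: "1 \<le> m" "m \<le> l'" "k' = l' - (m-1)" "run \<delta> q0 (rev (take m (rev ?u))) \<in> Acc"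
      using lu by auto
    have eq: "rev (take m (rev ?u)) = subtrace \<eta> k' l'"
      using m lu by (simp add: take_rev subtrace_def)
    have "models (subtrace \<eta> k' l') \<phi>"
      using R[OF _ st, of "k'-1" l'] m eq l' by (simp add: models_def subtrace_def)
    moreover have "fst (query \<delta> q0 Acc \<delta>F q0F AccF \<eta>) = Some (k', l')"
      using fw r bw s by (simp add: query_def)
    ultimately show "\<exists>k l. fst (query \<delta> q0 Acc \<delta>F q0F AccF \<eta>) = Some (k, l) \<and>
                   1 \<le> k \<and> k \<le> l \<and> l \<le> length \<eta> \<and> models (subtrace \<eta> k l) \<phi>"
      using m l' by auto
  qed
qed

end
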